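(* Let $\gamma$ be a gauge on $\mathbb{R}^d$ with skewness $\sigma$ and let $v\in\mathrm{SD}_\gamma$. Let $A\subset\mathbb{R}^d$ be finite with positive weights $w_a$ satisfying $\sum_{a\in A}w_a=1$, let $C\subseteq A$ with $w_C=\sum_{c\in C}w_c>\frac{1}{1+\sigma}$, put $D=A\setminus C$, and let $U\subset\mathbb{R}^d$ be bounded. For $M>0$ let $f_M(x)=\sum_{d\in D}w_d\gamma(x-d)+\sum_{c\in C}w_c\gamma(x-(c-Mv))$ (the Fermat–Weber objective after replacing each $c\in C$ by $c-Mv$, weights unchanged). Then there is $M_0>0$ such that for all $M>M_0$ no minimizer of $f_M$ lies in $U$.
   Context: A gauge $\gamma$ on $\mathbb{R}^d$ is the Minkowski functional of a convex compact set $B_\gamma$ with the origin in its interior (not necessarily symmetric). Its skewness is $\sigma=\sup_{x\neq0}\gamma(x)/\gamma(-x)$ and $\mathrm{SD}_\gamma=\{v:\gamma(v)=\sigma\gamma(-v)=1\}$ (nonempty). *)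

theory Defs
  imports "HOL-Analysis.Analysis"
begin

definition minkowski_fun :: "'a::euclidean_space set \<Rightarrow> 'a \<Rightarrow> real" where
  "minkowski_fun B x = Inf {t. t \<ge> 0 \<and> x \<in> (\<lambda>y. t *\<^sub>R y) ` B}"

definition gauge_body :: "'a::euclidean_space set \<Rightarrow> bool" where
  "gauge_body B \<longleftrightarrow> convex B \<and> compact B \<and> 0 \<in> interior B"

definition skewness :: "('a::euclidean_space \<Rightarrow> real) \<Rightarrow> real" where
  "skewness g = (SUP x\<in>UNIV - {0}. g x / g (- x))"

definition SD :: "('a::euclidean_space \<Rightarrow> real) \<Rightarrow> 'a set" where
  "SD g = {v. g v = 1 \<and> skewness g * g (- v) = 1}"

definition fw_shifted ::
  "('a::euclidean_space \<Rightarrow> real) \<Rightarrow> 'a set \<Rightarrow> 'a set \<Rightarrow> ('a \<Rightarrow> real) \<Rightarrow> 'a \<Rightarrow> real \<Rightarrow> 'a \<Rightarrow> real" where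
  "fw_shifted g A C w v M x =
     (\<Sum>d\<in>A - C. w d * g (x - d)) + (\<Sum>c\<in>C. w c * g (x - (c - M *\<^sub>R v)))"

end

theory Submission
  imports Defs
begin

definition Sset :: "'a::euclidean_space set \<Rightarrow> 'a \<Rightarrow> real set" where
  "Sset B x = {t. t \<ge> 0 \<and> x \<in> (\<lambda>y. t *\<^sub>R y) ` B}"

lemma gb_ball: assumes "gauge_body B" obtains e where "e > 0" "cball 0 e \<subseteq> B"
  using assms unfolding gauge_body_def by (meson mem_interior_cball)

lemma gb_zero: assumes "gauge_body B" shows "0 \<in> B"
  using assms unfolding gauge_body_def by (meson interior_subset subsetD)

lemma S_mem:
  assumes "e > 0" "cball 0 e \<subseteq> B"
  shows "norm x / e \<in> Sset B x"
proof (cases "x = 0")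
  case True
  have "(0::'a) \<in> B" using assms by auto
  then show ?thesis using True unfolding Sset_def by (auto intro!: image_eqI[where x=0])
next
  case False
  let ?t = "norm x / e"
  have tp: "?t > 0" using False assms by auto
  have "x /\<^sub>R ?t \<in> cball 0 e" using tp assms by (simp add: field_simps)
  then have "x /\<^sub>R ?t \<in> B" using assms by auto
  moreover have "x = ?t *\<^sub>R (x /\<^sub>R ?t)" using tp assms(1) by simp
  ultimately show ?thesis using tp unfolding Sset_def by (auto intro!: image_eqI[where x="x /\<^sub>R ?t"])
qed

lemma mf_eq: "minkowski_fun B x = Inf (Sset B x)"
  unfolding minkowski_fun_def Sset_def by simp

lemma S_bdd: "bdd_below (Sset B x)"
  unfolding Sset_def bdd_below_def by auto

lemma mf_le: "t \<in> Sset B x \<Longrightarrow> minkowski_fun B x \<le> t"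
  unfolding mf_eq by (rule cInf_lower[OF _ S_bdd])

lemma mf_ge:
  assumes "gauge_body B" "\<And>t. t \<in> Sset B x \<Longrightarrow> z \<le> t"
  shows "z \<le> minkowski_fun B x"
proof -
  obtain e where "e > 0" "cball 0 e \<subseteq> B" using gb_ball assms(1) by blast
  then have "Sset B x \<noteq> {}" using S_mem by blast
  then show ?thesis unfolding mf_eq using assms(2) by (rule cInf_greatest)
qed

lemma mf_nonneg: "gauge_body B \<Longrightarrow> 0 \<le> minkowski_fun B x"
  by (rule mf_ge) (auto simp: Sset_def)

lemma mf_bound:
  assumes "gauge_body B" obtains e where "e > 0" "\<And>x. minkowski_fun B x \<le> norm x / e"
proof -
  obtain e where "e > 0" "cball 0 e \<subseteq> B" using gb_ball assms(1) by blast
  then show ?thesis using that mf_le S_mem by blast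
qed

lemma S_add:
  assumes "gauge_body B" "s \<in> Sset B x" "t \<in> Sset B y"
  shows "s + t \<in> Sset B (x + y)"
proof -
  obtain b1 b2 where b: "b1 \<in> B" "b2 \<in> B" "x = s *\<^sub>R b1" "y = t *\<^sub>R b2" "s \<ge> 0" "t \<ge> 0"
    using assms(2,3) unfolding Sset_def by auto
  have cv: "convex B" using assms(1) unfolding gauge_body_def by simp
  show ?thesis
  proof (cases "s + t = 0")
    case True
    then have "s = 0" "t = 0" using b by auto
    then show ?thesis using b gb_zero[OF assms(1)] unfolding Sset_def
      by (auto intro!: image_eqI[where x=0])
  next
    case False
    then have p: "s + t > 0" using b by auto
    let ?b = "(s/(s+t)) *\<^sub>R b1 + (t/(s+t)) *\<^sub>R b2"
    have "?b \<in> B" using convexD[OF cv b(1,2), of "s/(s+t)" "t/(s+t)"] p b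
      by (simp add: add_divide_distrib[symmetric])
    moreover have "x + y = (s+t) *\<^sub>R ?b" using p b by (simp add: scaleR_add_right)
    ultimately show ?thesis using p unfolding Sset_def by auto
  qed
qed

lemma mf_subadd:
  assumes "gauge_body B"
  shows "minkowski_fun B (x + y) \<le> minkowski_fun B x + minkowski_fun B y"
proof -
  have "minkowski_fun B (x+y) - t \<le> minkowski_fun B x" if t: "t \<in> Sset B y" for t
  proof -
    have "minkowski_fun B (x+y) - t \<le> s" if "s \<in> Sset B x" for s
      using mf_le[OF S_add[OF assms that t]] by simp
    then show ?thesis by (rule mf_ge[OF assms])
  qed
  then have "minkowski_fun B (x+y) - minkowski_fun B x \<le> minkowski_fun B y"
    by (intro mf_ge[OF assms]) (simp add: algebra_simps)
  then show ?thesis by simp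
qed

lemma S_scale:
  assumes "r > 0" "t \<in> Sset B x" shows "r * t \<in> Sset B (r *\<^sub>R x)"
  using assms unfolding Sset_def by auto

lemma mf_scale_le:
  assumes "gauge_body B" "r > 0"
  shows "minkowski_fun B (r *\<^sub>R x) \<le> r * minkowski_fun B x"
proof -
  have "minkowski_fun B (r *\<^sub>R x) / r \<le> t" if "t \<in> Sset B x" for t
    using mf_le[OF S_scale[OF assms(2) that]] assms(2) by (simp add: field_simps)
  then have "minkowski_fun B (r *\<^sub>R x) / r \<le> minkowski_fun B x" by (rule mf_ge[OF assms(1)])
  then show ?thesis using assms(2) by (simp add: field_simps)
qed

lemma mf_scale:
  assumes "gauge_body B" "r > 0"
  shows "minkowski_fun B (r *\<^sub>R x) = r * minkowski_fun B x"
proof -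
  have "minkowski_fun B ((1/r) *\<^sub>R (r *\<^sub>R x)) \<le> (1/r) * minkowski_fun B (r *\<^sub>R x)"
    using mf_scale_le[OF assms(1), of "1/r" "r *\<^sub>R x"] assms(2) by simp
  then have "r * minkowski_fun B x \<le> minkowski_fun B (r *\<^sub>R x)"
    using assms(2) by (simp add: field_simps)
  then show ?thesis using mf_scale_le[OF assms, of x] by linarith
qed


theorem mainTheorem4:
  fixes B :: "'a::euclidean_space set" and v :: 'a and A C U :: "'a set" and w :: "'a \<Rightarrow> real"
  assumes "gauge_body B"
    and "v \<in> SD (minkowski_fun B)"
    and "finite A"
    and "\<And>a. a \<in> A \<Longrightarrow> w a > 0"
    and "(\<Sum>a\<in>A. w a) = 1"
    and "C \<subseteq> A"
    and "(\<Sum>c\<in>C. w c) > 1 / (1 + skewness (minkowski_fun B))"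
    and "bounded U"
  shows "\<exists>M0>0. \<forall>M>M0. \<forall>x.
           (\<forall>y. fw_shifted (minkowski_fun B) A C w v M x \<le> fw_shifted (minkowski_fun B) A C w v M y)
           \<longrightarrow> x \<notin> U"
proof -
  let ?g = "minkowski_fun B"
  let ?f = "fw_shifted ?g A C w v"
  let ?s = "skewness ?g"
  define wC where "wC = (\<Sum>c\<in>C. w c)"
  define wD where "wD = (\<Sum>d\<in>A - C. w d)"
  have gb: "gauge_body B" by fact
  have sum1: "wD + wC = 1" using assms(3,5,6) unfolding wC_def wD_def
    by (metis sum.subset_diff)
  have wD0: "wD \<ge> 0" unfolding wD_def using assms(4) by (intro sum_nonneg) (auto intro: less_imp_le)
  have wC0: "wC \<ge> 0" unfolding wC_def using assms(4,6) by (intro sum_nonneg) (auto intro: less_imp_le)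
  have gv: "?g v = 1" and sg: "?s * ?g (- v) = 1" using assms(2) unfolding SD_def by auto
  have gmv0: "?g (- v) \<ge> 0" by (rule mf_nonneg[OF gb])
  have sp: "?s > 0"
  proof (rule ccontr)
    assume "\<not> ?s > 0" then have "?s * ?g (- v) \<le> 0" using gmv0 by (simp add: mult_nonpos_nonneg)
    then show False using sg by simp
  qed
  have gmv: "?g (- v) = 1 / ?s" using sg sp by (simp add: field_simps)
  have "wC * (1 + ?s) > 1" using assms(7) sp unfolding wC_def by (simp add: field_simps)
  then have "wC * ?s - wD > 0" using sum1 by (simp add: algebra_simps)
  then have "wD / ?s < wC" using sp by (simp add: divide_less_eq mult.commute)
  then have dpos: "wC - wD * ?g (- v) > 0" using gmv by simp
  define \<delta> where "\<delta> = wC - wD * ?g (- v)"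
  obtain e where e: "e > 0" "\<And>x. ?g x \<le> norm x / e" using mf_bound[OF gb] by blast
  have "bounded (A \<union> U)" using assms(3,8) by (simp add: finite_imp_bounded)
  then obtain R where R: "R > 0" "\<And>x. x \<in> A \<union> U \<Longrightarrow> norm x \<le> R" using bounded_pos by metis
  define K where "K = 2 * R / e"
  have K0: "K \<ge> 0" using R e by (simp add: K_def)
  have Kb: "?g (a - x) \<le> K" if "a \<in> A \<union> U \<or> a = 0" "x \<in> A \<union> U \<or> x = 0" for a x
  proof -
    have "norm (a - x) \<le> norm a + norm x" by (rule norm_triangle_ineq4)
    also have "\<dots> \<le> 2 * R"
    proof -
      have "norm a \<le> R" using R that(1) by auto
      moreover have "norm x \<le> R" using R that(2) by auto
      ultimately show ?thesis by simp
    qed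
    finally have "norm (a - x) / e \<le> 2 * R / e" using e(1) by (simp add: divide_right_mono)
    then show ?thesis using e(2)[of "a - x"] unfolding K_def by linarith
  qed
  define M0 where "M0 = (2 * K + 1) / \<delta>"
  have "M0 > 0" unfolding M0_def \<delta>_def using dpos K0 by simp
  moreover have "x \<notin> U" if M: "M > M0" and mn: "\<forall>y. ?f M x \<le> ?f M y" for M x
  proof
    assume xU: "x \<in> U"
    have Mp: "M > 0" using M \<open>M0 > 0\<close> by simp
    have gMv: "?g (M *\<^sub>R v) = M" using mf_scale[OF gb Mp] gv by simp
    have gMmv: "?g (M *\<^sub>R (- v)) = M * ?g (- v)" using mf_scale[OF gb Mp, of "- v"] by simp
    have lc: "?g (x - (c - M *\<^sub>R v)) \<ge> M - K" if c: "c \<in> C" for c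
    proof -
      have "?g (M *\<^sub>R v) \<le> ?g (x - (c - M *\<^sub>R v)) + ?g (c - x)"
        using mf_subadd[OF gb, of "x - (c - M *\<^sub>R v)" "c - x"] by (simp add: algebra_simps)
      moreover have "?g (c - x) \<le> K" using Kb[of c x] c assms(6) xU by auto
      ultimately show ?thesis using gMv by simp
    qed
    have "(\<Sum>c\<in>C. w c * (M - K)) \<le> (\<Sum>c\<in>C. w c * ?g (x - (c - M *\<^sub>R v)))"
      using lc assms(4,6) by (intro sum_mono mult_left_mono) (auto intro: less_imp_le)
    moreover have "(\<Sum>d\<in>A - C. w d * ?g (x - d)) \<ge> 0"
      using assms(4) mf_nonneg[OF gb] by (intro sum_nonneg) (simp add: less_imp_le)
    ultimately have fx: "?f M x \<ge> wC * (M - K)"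
      unfolding fw_shifted_def wC_def by (simp add: sum_distrib_right)
    define y where "y = - (M *\<^sub>R v)"
    have ud: "?g (y - d) \<le> M * ?g (- v) + K" if d: "d \<in> A - C" for d
    proof -
      have "?g (y - d) \<le> ?g (M *\<^sub>R (- v)) + ?g (0 - d)"
        using mf_subadd[OF gb, of "M *\<^sub>R (- v)" "0 - d"] unfolding y_def by simp
      moreover have "?g (0 - d) \<le> K" using Kb[of 0 d] d R(2)[of d] by (auto intro!: Kb) 
      ultimately show ?thesis using gMmv by simp
    qed
    have uc: "?g (y - (c - M *\<^sub>R v)) \<le> K" if c: "c \<in> C" for c
    proof -
      have e1: "y - (c - M *\<^sub>R v) = 0 - c" unfolding y_def by simp
      moreover have "?g (0 - c) \<le> K" using Kb[of 0 c] c assms(6) by auto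
      ultimately show ?thesis unfolding e1 by blast
    qed
    have "(\<Sum>d\<in>A - C. w d * ?g (y - d)) \<le> (\<Sum>d\<in>A - C. w d * (M * ?g (- v) + K))"
      using ud assms(4) by (intro sum_mono mult_left_mono) (auto intro: less_imp_le)
    moreover have "(\<Sum>c\<in>C. w c * ?g (y - (c - M *\<^sub>R v))) \<le> (\<Sum>c\<in>C. w c * K)"
      using uc assms(4,6) by (intro sum_mono mult_left_mono) (auto intro: less_imp_le)
    ultimately have fy: "?f M y \<le> wD * (M * ?g (- v) + K) + wC * K"
      unfolding fw_shifted_def wC_def wD_def by (simp add: sum_distrib_right)
    have "M * \<delta> > 2 * K + 1" using M dpos unfolding M0_def \<delta>_def by (simp add: field_simps)
    moreover have "wD * (M * ?g (- v) + K) + wC * K - wC * (M - K) = K * (wD + 2 * wC) - M * \<delta>"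
      unfolding \<delta>_def by (simp add: algebra_simps)
    moreover have "K * (wD + 2 * wC) \<le> 2 * K"
    proof -
      have "wD + 2 * wC \<le> 2" using sum1 wC0 wD0 by linarith
      then show ?thesis using K0 by (metis mult.commute mult_right_mono)
    qed
    ultimately have "wD * (M * ?g (- v) + K) + wC * K < wC * (M - K)" by linarith
    moreover have "?f M x \<le> ?f M y" using mn by blast
    ultimately show False using fx fy by linarith
  qed
  ultimately show ?thesis by blast
qed

end
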